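(* Let $f:[0,1]\to\mathbb{R}$ and $g:[0,1]\to\mathbb{R}$ be (sufficiently regular) scalar functions and consider the linear SDE $dx = f(t)\,x\,dt + g(t)\,dw$ on $\mathbb{R}^d$, $t\in[0,1]$. Define $$\alpha_t = e^{\int_0^t f(\tau)\,d\tau},\quad \bar\alpha_t = e^{-\int_t^1 f(\tau)\,d\tau},\quad \sigma_t^2=\int_0^t \frac{g^2(\tau)}{\alpha_\tau^2}\,d\tau,\quad \bar\sigma_t^2=\int_t^1 \frac{g^2(\tau)}{\alpha_\tau^2}\,d\tau .$$ Fix $x_0,x_1\in\mathbb{R}^d$ and $\epsilon>0$, and let $p_{\text{target}}=\mathcal{N}(x_0,\epsilon^2 I)$ and $p_{\text{initial}}=\mathcal{N}(x_1,\alpha_1^2\epsilon^2 I)$. Set $$\sigma^2=\epsilon^2+\frac{\sqrt{\sigma_1^4+4\epsilon^4}-\sigma_1^2}{2},\qquad a = x_0+\frac{\sigma^2}{\sigma_1^2}\Big(x_0-\frac{x_1}{\alpha_1}\Big),\qquad b = x_1+\frac{\sigma^2}{\sigma_1^2}\big(x_1-\alpha_1 x_0\big).$$ Then the functions $$\widehat{\Psi}_t^{\epsilon}=\mathcal{N}\big(\alpha_t a,\ (\alpha_t^2\sigma^2+\alpha_t^2\sigma_t^2)I\big),\qquad \Psi_t^{\epsilon}=\mathcal{N}\big(\bar\alpha_t b,\ (\alpha_t^2\sigma^2+\alpha_t^2\bar\sigma_t^2)I\big),\qquad t\in[0,1],$$ solve the Schrödinger bridge system $$\frac{\partial \Psi}{\partial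 t}=-\nabla_x\Psi^{\top} (f(t)x)-\tfrac12\operatorname{Tr}\!\big(g(t)^2\nabla_x^2\Psi\big),\qquad \frac{\partial \widehat\Psi}{\partial t}=-\nabla_x\cdot\big(\widehat\Psi\, f(t)x\big)+\tfrac12\operatorname{Tr}\!\big(g(t)^2\nabla_x^2\widehat\Psi\big),$$ subject to $\Psi_0\widehat\Psi_0=p_{\text{target}}$ and $\Psi_1\widehat\Psi_1=p_{\text{initial}}$. Moreover, as $\epsilon\to 0$, $\widehat\Psi_t^{\epsilon}$ and $\Psi_t^{\epsilon}$ converge to $$\widehat\Psi_t=\mathcal{N}\big(\alpha_t x_0,\ \alpha_t^2\sigma_t^2 I\big),\qquad \Psi_t=\mathcal{N}\big(\bar\alpha_t x_1,\ \alpha_t^2\bar\sigma_t^2 I\big).$$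
   Context: $\mathcal{N}(\mu,\Sigma)$ denotes the Gaussian density with mean $\mu$ and covariance $\Sigma$; as usual for Schrödinger bridge potentials, $\Psi,\widehat\Psi$ are understood up to positive multiplicative constants, so the boundary identities $\Psi_0\widehat\Psi_0=p_{\text{target}}$, $\Psi_1\widehat\Psi_1=p_{\text{initial}}$ are equalities of densities after normalization. $w$ is a standard Brownian motion on $\mathbb{R}^d$ and $I$ the $d\times d$ identity. *)

theory Defs
  imports "HOL-Analysis.Analysis"
begin

definition gauss :: "real^'n \<Rightarrow> real \<Rightarrow> real^'n \<Rightarrow> real" where
  "gauss mu v x = (2 * pi * v) powr (- real CARD('n) / 2) * exp (- (norm (x - mu))\<^sup>2 / (2 * v))"

definition pd :: "(real^'n \<Rightarrow> real) \<Rightarrow> 'n \<Rightarrow> real^'n \<Rightarrow> real" where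
  "pd u i x = deriv (\<lambda>h. u (x + h *\<^sub>R axis i 1)) 0"

definition laplacian :: "(real^'n \<Rightarrow> real) \<Rightarrow> real^'n \<Rightarrow> real" where
  "laplacian u x = (\<Sum>i\<in>UNIV. pd (pd u i) i x)"

definition twice_pdiff :: "(real^'n \<Rightarrow> real) \<Rightarrow> real^'n \<Rightarrow> bool" where
  "twice_pdiff u x \<longleftrightarrow> (\<forall>i. (\<lambda>h. u (x + h *\<^sub>R axis i 1)) differentiable (at 0)
                         \<and> (\<lambda>h. pd u i (x + h *\<^sub>R axis i 1)) differentiable (at 0))"

definition sb_backward :: "(real \<Rightarrow> real) \<Rightarrow> (real \<Rightarrow> real) \<Rightarrow> (real \<Rightarrow> real^'n \<Rightarrow> real) \<Rightarrow> bool" where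
  "sb_backward f g Psi \<longleftrightarrow> (\<forall>t\<in>{0..1}. \<forall>x. twice_pdiff (Psi t) x \<and>
      ((\<lambda>s. Psi s x) has_real_derivative
         (- (\<Sum>i\<in>UNIV. pd (Psi t) i x * (f t * x $ i)) - 1/2 * (g t)\<^sup>2 * laplacian (Psi t) x))
      (at t within {0..1}))"

definition sb_forward :: "(real \<Rightarrow> real) \<Rightarrow> (real \<Rightarrow> real) \<Rightarrow> (real \<Rightarrow> real^'n \<Rightarrow> real) \<Rightarrow> bool" where
  "sb_forward f g Psih \<longleftrightarrow> (\<forall>t\<in>{0..1}. \<forall>x. twice_pdiff (Psih t) x \<and>
      (\<forall>i. (\<lambda>h. Psih t (x + h *\<^sub>R axis i 1) * (f t * (x + h *\<^sub>R axis i 1) $ i)) differentiable (at 0)) \<and>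
      ((\<lambda>s. Psih s x) has_real_derivative
         (- (\<Sum>i\<in>UNIV. pd (\<lambda>y. Psih t y * (f t * y $ i)) i x) + 1/2 * (g t)\<^sup>2 * laplacian (Psih t) x))
      (at t within {0..1}))"

definition alpha :: "(real \<Rightarrow> real) \<Rightarrow> real \<Rightarrow> real" where
  "alpha f t = exp (integral {0..t} f)"

definition alphabar :: "(real \<Rightarrow> real) \<Rightarrow> real \<Rightarrow> real" where
  "alphabar f t = exp (- integral {t..1} f)"

definition sig2 :: "(real \<Rightarrow> real) \<Rightarrow> (real \<Rightarrow> real) \<Rightarrow> real \<Rightarrow> real" where
  "sig2 f g t = integral {0..t} (\<lambda>\<tau>. (g \<tau>)\<^sup>2 / (alpha f \<tau>)\<^sup>2)"

definition sigbar2 :: "(real \<Rightarrow> real) \<Rightarrow> (real \<Rightarrow> real) \<Rightarrow> real \<Rightarrow> real" where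
  "sigbar2 f g t = integral {t..1} (\<lambda>\<tau>. (g \<tau>)\<^sup>2 / (alpha f \<tau>)\<^sup>2)"

definition sbsigma2 :: "(real \<Rightarrow> real) \<Rightarrow> (real \<Rightarrow> real) \<Rightarrow> real \<Rightarrow> real" where
  "sbsigma2 f g eps = eps\<^sup>2 + (sqrt ((sig2 f g 1)\<^sup>2 + 4 * eps ^ 4) - sig2 f g 1) / 2"

definition sb_a :: "(real \<Rightarrow> real) \<Rightarrow> (real \<Rightarrow> real) \<Rightarrow> real^'n \<Rightarrow> real^'n \<Rightarrow> real \<Rightarrow> real^'n" where
  "sb_a f g x0 x1 eps = x0 + (sbsigma2 f g eps / sig2 f g 1) *\<^sub>R (x0 - (1 / alpha f 1) *\<^sub>R x1)"

definition sb_b :: "(real \<Rightarrow> real) \<Rightarrow> (real \<Rightarrow> real) \<Rightarrow> real^'n \<Rightarrow> real^'n \<Rightarrow> real \<Rightarrow> real^'n" where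
  "sb_b f g x0 x1 eps = x1 + (sbsigma2 f g eps / sig2 f g 1) *\<^sub>R (x1 - alpha f 1 *\<^sub>R x0)"

definition Psihat :: "(real \<Rightarrow> real) \<Rightarrow> (real \<Rightarrow> real) \<Rightarrow> real^'n \<Rightarrow> real^'n \<Rightarrow> real \<Rightarrow> real \<Rightarrow> real^'n \<Rightarrow> real" where
  "Psihat f g x0 x1 eps t = gauss (alpha f t *\<^sub>R sb_a f g x0 x1 eps)
      ((alpha f t)\<^sup>2 * sbsigma2 f g eps + (alpha f t)\<^sup>2 * sig2 f g t)"

definition Psi :: "(real \<Rightarrow> real) \<Rightarrow> (real \<Rightarrow> real) \<Rightarrow> real^'n \<Rightarrow> real^'n \<Rightarrow> real \<Rightarrow> real \<Rightarrow> real^'n \<Rightarrow> real" where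
  "Psi f g x0 x1 eps t = gauss (alphabar f t *\<^sub>R sb_b f g x0 x1 eps)
      ((alpha f t)\<^sup>2 * sbsigma2 f g eps + (alpha f t)\<^sup>2 * sigbar2 f g t)"

end

theory Submission
  imports Defs
begin

definition gfun :: "real \<Rightarrow> real^'n \<Rightarrow> real \<Rightarrow> real^'n \<Rightarrow> real" where
  "gfun K m v x = K * exp (-(norm (x - m))\<^sup>2 / (2 * v))"

lemma normsq_axis:
  "(norm (x + h *\<^sub>R axis i 1 - m))\<^sup>2 = (norm (x-m))\<^sup>2 + 2 * h*((x-m)$i) + h^2"
proof -
  have "x + h *\<^sub>R axis i 1 - m = (x - m) + h *\<^sub>R axis i 1" by simp
  then show ?thesis
    by (simp only: power2_norm_eq_inner inner_add_left inner_add_right inner_scaleR_left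
        inner_scaleR_right inner_axis inner_axis' inner_axis_axis) (simp add: power2_eq_square algebra_simps)
qed

lemma comp_axis: "(x + h *\<^sub>R axis i 1 - m) $ i = (x - m) $ i + h"
  by (simp add: axis_def)

lemma ge_line:
  "gfun K m v (x + h *\<^sub>R axis i 1) = K * exp (-((norm (x-m))\<^sup>2 + 2 * h*((x-m)$i) + h^2)/(2 * v))"
  unfolding gfun_def normsq_axis ..

lemma deriv1:
  assumes "v \<noteq> 0"
  shows "((\<lambda>h. K * exp (-(A + 2 * h*B + h^2)/(2 * v))) has_real_derivative K * exp(-A/(2 * v)) * (-B/v)) (at 0)"
  using assms
  by (auto intro!: derivative_eq_intros simp: field_simps)

lemma deriv2:
  assumes "v \<noteq> 0"
  shows "((\<lambda>h. - (K * exp (-(A + 2 * h*B + h^2)/(2 * v))) * (B + h) / v) has_real_derivative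
      K * exp(-A/(2 * v)) * (B^2/v^2 - 1/v)) (at 0)"
  using assms
  by (auto intro!: derivative_eq_intros simp: field_simps power2_eq_square)

lemma deriv3:
  assumes "v \<noteq> 0"
  shows "((\<lambda>h. (K * exp (-(A + 2 * h*B + h^2)/(2 * v))) * (c * (y + h))) has_real_derivative
      K * exp(-A/(2 * v)) * c * (1 - B * y / v)) (at 0)"
  using assms
  by (auto intro!: derivative_eq_intros simp: field_simps power2_eq_square)

lemma pd_ge:
  assumes "v \<noteq> 0"
  shows "pd (gfun K m v) i x = - gfun K m v x * ((x-m)$i) / v"
proof -
  have "deriv (\<lambda>h. gfun K m v (x + h *\<^sub>R axis i 1)) 0 = K * exp(-(norm (x-m))\<^sup>2/(2 * v)) * (-((x-m)$i)/v)"
    unfolding ge_line by (rule DERIV_imp_deriv[OF deriv1[OF assms]])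
  then have "deriv (\<lambda>h. gfun K m v (x + h *\<^sub>R axis i 1)) 0 = gfun K m v x * (-((x-m)$i)/v)"
    unfolding gfun_def .
  then show ?thesis unfolding pd_def by (simp add: algebra_simps minus_divide_left)
qed

lemma pd_ge_fun:
  assumes "v \<noteq> 0"
  shows "pd (gfun K m v) i = (\<lambda>y. - gfun K m v y * ((y-m)$i) / v)"
  using pd_ge[OF assms] by blast

lemma pd2_line:
  "(\<lambda>h. - gfun K m v (x + h *\<^sub>R axis i 1) * ((x + h *\<^sub>R axis i 1 - m)$i) / v) =
   (\<lambda>h. - (K * exp (-((norm (x-m))\<^sup>2 + 2 * h*((x-m)$i) + h^2)/(2 * v))) * ((x-m)$i + h) / v)"
  unfolding ge_line comp_axis ..

lemma pd2_ge:
  assumes "v \<noteq> 0"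
  shows "pd (pd (gfun K m v) i) i x = gfun K m v x * (((x-m)$i)\<^sup>2/v^2 - 1/v)"
proof -
  have "deriv (\<lambda>h. pd (gfun K m v) i (x + h *\<^sub>R axis i 1)) 0 = K * exp(-(norm (x-m))\<^sup>2/(2 * v)) * (((x-m)$i)\<^sup>2/v^2 - 1/v)"
    unfolding pd_ge_fun[OF assms] pd2_line by (rule DERIV_imp_deriv[OF deriv2[OF assms]])
  then have "deriv (\<lambda>h. pd (gfun K m v) i (x + h *\<^sub>R axis i 1)) 0 = gfun K m v x * (((x-m)$i)\<^sup>2/v^2 - 1/v)"
    unfolding gfun_def .
  then show ?thesis unfolding pd_def[of "pd (gfun K m v) i"] .
qed

lemma twice_pdiff_ge:
  assumes "v \<noteq> 0"
  shows "twice_pdiff (gfun K m v) x"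
  unfolding twice_pdiff_def
proof
  fix i
  show "(\<lambda>h. gfun K m v (x + h *\<^sub>R axis i 1)) differentiable at 0 \<and>
        (\<lambda>h. pd (gfun K m v) i (x + h *\<^sub>R axis i 1)) differentiable at 0"
    unfolding pd_ge_fun[OF assms] ge_line comp_axis
    using deriv1[OF assms] deriv2[OF assms] real_differentiable_def by blast
qed

lemma sum_sq_comp: "(\<Sum>i\<in>UNIV. ((y::real^'n)$i)\<^sup>2) = (norm y)\<^sup>2"
proof -
  have "(norm y)^2 = inner y y" by (rule power2_norm_eq_inner)
  then show ?thesis by (simp add: inner_vec_def power2_eq_square)
qed

lemma sum_prod_comp: "(\<Sum>i\<in>UNIV. (y::real^'n)$i * z$i) = inner y z"
  by (simp add: inner_vec_def)

lemma laplacian_ge: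
  assumes "v \<noteq> 0"
  shows "laplacian (gfun K m v) (x::real^'n) = gfun K m v x * ((norm (x-m))\<^sup>2/v^2 - real CARD('n)/v)"
proof -
  have "laplacian (gfun K m v) x = (\<Sum>i\<in>UNIV. gfun K m v x * (((x-m)$i)\<^sup>2/v^2 - 1/v))"
    unfolding laplacian_def pd2_ge[OF assms] ..
  also have "\<dots> = gfun K m v x * ((\<Sum>i\<in>UNIV. ((x-m)$i)\<^sup>2)/v^2 - real CARD('n)/v)"
    by (simp add: sum_distrib_left sum_subtractf sum_divide_distrib[symmetric] right_diff_distrib)
  finally show ?thesis unfolding sum_sq_comp .
qed

lemma fw_line:
  "(\<lambda>h. gfun K m v (x + h *\<^sub>R axis i 1) * (c * (x + h *\<^sub>R axis i 1) $ i)) =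
   (\<lambda>h. (K * exp (-((norm (x-m))\<^sup>2 + 2 * h*((x-m)$i) + h^2)/(2 * v))) * (c * (x$i + h)))"
  unfolding ge_line by (simp add: axis_def)

lemma pd_fw:
  assumes "v \<noteq> 0"
  shows "pd (\<lambda>y. gfun K m v y * (c * y $ i)) i x = gfun K m v x * c * (1 - ((x-m)$i) * x$i / v)"
proof -
  have "deriv (\<lambda>h. gfun K m v (x + h *\<^sub>R axis i 1) * (c * (x + h *\<^sub>R axis i 1) $ i)) 0
     = K * exp(-(norm (x-m))\<^sup>2/(2 * v)) * c * (1 - ((x-m)$i) * x$i / v)"
    unfolding fw_line by (rule DERIV_imp_deriv[OF deriv3[OF assms]])
  then have "deriv (\<lambda>h. gfun K m v (x + h *\<^sub>R axis i 1) * (c * (x + h *\<^sub>R axis i 1) $ i)) 0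
     = gfun K m v x * c * (1 - ((x-m)$i) * x$i / v)"
    unfolding gfun_def .
  then show ?thesis unfolding pd_def .
qed

lemma fw_diff:
  assumes "v \<noteq> 0"
  shows "(\<lambda>h. gfun K m v (x + h *\<^sub>R axis i 1) * (c * (x + h *\<^sub>R axis i 1) $ i)) differentiable (at 0)"
  unfolding fw_line using deriv3[OF assms] real_differentiable_def by blast

lemma normsq_scale:
  "(norm (x - mu *\<^sub>R m0))\<^sup>2 = inner x x - 2 * mu * inner x m0 + mu\<^sup>2 * inner m0 m0"
  unfolding power2_norm_eq_inner
  by (simp add: inner_diff_left inner_diff_right inner_commute power2_eq_square algebra_simps)

lemma gen_deriv:
  assumes K: "(K has_real_derivative K') (at t within S)"
    and N: "(N has_real_derivative N') (at t within S)"
    and V: "(V has_real_derivative V') (at t within S)" and V0: "V t \<noteq> 0"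
  shows "((\<lambda>s. K s * exp (- N s / (2 * V s))) has_real_derivative
     K' * exp (- N t / (2 * V t)) + K t * exp (- N t / (2 * V t)) * ((N t * V' - N' * V t) / (2 * (V t)\<^sup>2)))
     (at t within S)"
  apply (rule derivative_eq_intros K N V refl | simp add: V0)+
  using V0 by (simp add: field_simps power2_eq_square)

lemma time_deriv:
  fixes m0 x :: "real^'n"
  assumes K: "(K has_real_derivative K') (at t within S)"
    and mu: "(mu has_real_derivative mu') (at t within S)"
    and V: "(V has_real_derivative V') (at t within S)" and V0: "V t \<noteq> 0"
  shows "((\<lambda>s. gfun (K s) (mu s *\<^sub>R m0) (V s) x) has_real_derivative
     (K' * exp(-(norm (x - mu t *\<^sub>R m0))\<^sup>2/(2 * V t)) + gfun (K t) (mu t *\<^sub>R m0) (V t) x *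
        ((norm (x - mu t *\<^sub>R m0))\<^sup>2 * V' / (2 * (V t)\<^sup>2) + mu' * inner (x - mu t *\<^sub>R m0) m0 / V t)))
     (at t within S)"
proof -
  define N where "N s = (norm (x - mu s *\<^sub>R m0))\<^sup>2" for s
  have Neq: "N = (\<lambda>s. inner x x - 2 * mu s * inner x m0 + (mu s)\<^sup>2 * inner m0 m0)"
    unfolding N_def normsq_scale ..
  have ND: "(N has_real_derivative (-2 * mu' * inner (x - mu t *\<^sub>R m0) m0)) (at t within S)"
    unfolding Neq
    apply (rule derivative_eq_intros mu refl)+
    by (simp add: inner_diff_left inner_commute algebra_simps)
  have eq: "(\<lambda>s. gfun (K s) (mu s *\<^sub>R m0) (V s) x) = (\<lambda>s. K s * exp (- N s / (2 * V s)))"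
    unfolding gfun_def N_def ..
  show ?thesis unfolding eq
    apply (rule DERIV_cong[OF gen_deriv[OF K ND V V0]])
    using V0 by (simp add: N_def gfun_def field_simps power2_eq_square)
qed

lemma powr_deriv:
  assumes V: "(V has_real_derivative V') (at t within S)" and "V t > 0" "c > 0"
  shows "((\<lambda>s. (c * V s) powr r) has_real_derivative (c * V t) powr r * (r * V' / V t)) (at t within S)"
  using assms
  apply (auto intro!: derivative_eq_intros V)
  apply (simp add: powr_diff field_simps)
  done

lemma alpha_pos: "alpha f t > 0"
  unfolding alpha_def by simp

lemma alphabar_pos: "alphabar f t > 0"
  unfolding alphabar_def by simp

lemma d_alpha:
  assumes cf: "continuous_on {0..1} f" and t: "t \<in> {0..1}"
  shows "(alpha f has_real_derivative alpha f t * f t) (at t within {0..1})"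
proof -
  have "((\<lambda>s. exp (integral {0..s} f)) has_real_derivative exp (integral {0..t} f) * f t) (at t within {0..1})"
    by (rule derivative_eq_intros integral_has_real_derivative[OF cf t] refl)+
  then show ?thesis unfolding alpha_def[abs_def] by simp
qed

lemma d_alphabar:
  assumes cf: "continuous_on {0..1} f" and t: "t \<in> {0..1}"
  shows "(alphabar f has_real_derivative alphabar f t * f t) (at t within {0..1})"
proof -
  have "((\<lambda>s. exp (- integral {s..1} f)) has_real_derivative exp (- integral {t..1} f) * (- (- f t))) (at t within {0..1})"
    by (rule derivative_eq_intros integral_has_real_derivative'[OF cf t] refl)+
  then show ?thesis unfolding alphabar_def[abs_def] by simp
qed

lemma cont_alpha:
  assumes cf: "continuous_on {0..1} f"
  shows "continuous_on {0..1} (alpha f)"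
  unfolding alpha_def[abs_def]
  by (intro continuous_intros indefinite_integral_continuous_1 integrable_continuous_interval cf)

lemma cont_h:
  assumes cf: "continuous_on {0..1} f" and cg: "continuous_on {0..1} g"
  shows "continuous_on {0..1} (\<lambda>\<tau>. (g \<tau>)\<^sup>2 / (alpha f \<tau>)\<^sup>2)"
proof -
  have ne: "\<And>\<tau>. alpha f \<tau> \<noteq> 0" using alpha_pos[of f] by (metis less_irrefl)
  show ?thesis using cont_alpha[OF cf] cg ne
    by (intro continuous_intros) auto
qed

lemma d_sig2:
  assumes cf: "continuous_on {0..1} f" and cg: "continuous_on {0..1} g" and t: "t \<in> {0..1}"
  shows "(sig2 f g has_real_derivative (g t)\<^sup>2 / (alpha f t)\<^sup>2) (at t within {0..1})"
  unfolding sig2_def[abs_def]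
  by (rule integral_has_real_derivative[OF cont_h[OF cf cg] t])

lemma d_sigbar2:
  assumes cf: "continuous_on {0..1} f" and cg: "continuous_on {0..1} g" and t: "t \<in> {0..1}"
  shows "(sigbar2 f g has_real_derivative - ((g t)\<^sup>2 / (alpha f t)\<^sup>2)) (at t within {0..1})"
  unfolding sigbar2_def[abs_def]
  by (rule integral_has_real_derivative'[OF cont_h[OF cf cg] t])

lemma sig2_nn:
  assumes cf: "continuous_on {0..1} f" and cg: "continuous_on {0..1} g" and t: "t \<in> {0..1}"
  shows "sig2 f g t \<ge> 0"
  unfolding sig2_def
proof (rule integral_nonneg)
  show "(\<lambda>\<tau>. (g \<tau>)\<^sup>2 / (alpha f \<tau>)\<^sup>2) integrable_on {0..t}"
    using t by (intro integrable_continuous_interval continuous_on_subset[OF cont_h[OF cf cg]]) auto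
qed auto

lemma sigbar2_nn:
  assumes cf: "continuous_on {0..1} f" and cg: "continuous_on {0..1} g" and t: "t \<in> {0..1}"
  shows "sigbar2 f g t \<ge> 0"
  unfolding sigbar2_def
proof (rule integral_nonneg)
  show "(\<lambda>\<tau>. (g \<tau>)\<^sup>2 / (alpha f \<tau>)\<^sup>2) integrable_on {t..1}"
    using t by (intro integrable_continuous_interval continuous_on_subset[OF cont_h[OF cf cg]]) auto
qed auto

lemma sig2_1_pos:
  assumes cf: "continuous_on {0..1} f" and cg: "continuous_on {0..1} g" and ex: "\<exists>t\<in>{0..1}. g t \<noteq> 0"
  shows "sig2 f g 1 > 0"
proof -
  have nn: "sig2 f g 1 \<ge> 0" using sig2_nn[OF cf cg] by auto
  have "integral {0..1} (\<lambda>\<tau>. (g \<tau>)\<^sup>2 / (alpha f \<tau>)\<^sup>2) \<noteq> 0"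
  proof
    assume "integral {0..1} (\<lambda>\<tau>. (g \<tau>)\<^sup>2 / (alpha f \<tau>)\<^sup>2) = 0"
    then have "\<forall>x\<in>{0..1}. (g x)\<^sup>2 / (alpha f x)\<^sup>2 = 0"
      using integral_eq_0_iff[OF cont_h[OF cf cg]] by simp
    moreover obtain t where t: "t \<in> {0..1}" "g t \<noteq> 0" using ex by blast
    ultimately have "(g t)\<^sup>2 / (alpha f t)\<^sup>2 = 0" by blast
    then show False using t(2) alpha_pos[of f t] by simp
  qed
  then show ?thesis using nn unfolding sig2_def by simp
qed

lemma sum_fw:
  "(\<Sum>i\<in>UNIV. G * c * (1 - (y::real^'n) $ i * x $ i / V)) = G * c * (real CARD('n) - inner y x / V)"
proof -
  have "(\<Sum>i\<in>UNIV. G * c * (1 - (y::real^'n) $ i * x $ i / V))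
      = (\<Sum>i\<in>UNIV. G * c - (G * c / V) * (y $ i * x $ i))"
    by (rule sum.cong) (auto simp: algebra_simps)
  also have "\<dots> = G * c * real CARD('n) - (G * c / V) * (\<Sum>i\<in>UNIV. y $ i * x $ i)"
    by (simp add: sum_subtractf sum_distrib_left[symmetric] sum_divide_distrib[symmetric])
  finally show ?thesis unfolding sum_prod_comp by (simp add: algebra_simps)
qed

lemma sum_bw:
  "(\<Sum>i\<in>UNIV. - G * ((y::real^'n) $ i) / V * (c * x $ i)) = - G * c * inner y x / V"
proof -
  have "(\<Sum>i\<in>UNIV. - G * ((y::real^'n) $ i) / V * (c * x $ i)) = (- G * c / V) * (\<Sum>i\<in>UNIV. y $ i * x $ i)"
    by (subst sum_distrib_left) (rule sum.cong, auto)
  then show ?thesis unfolding sum_prod_comp by simp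
qed

lemma inner_split: "inner (x - mu *\<^sub>R m0) x = (norm (x - mu *\<^sub>R m0))\<^sup>2 + mu * inner (x - mu *\<^sub>R m0) m0"
  unfolding power2_norm_eq_inner by (simp add: inner_diff_right)

lemma fw_alg:
  fixes V Vd ft gt G K E r d N mu Q :: real
  assumes "V > 0" "Vd = 2 * ft * V + gt\<^sup>2" "G = K * E" "r = - d / 2"
  shows "K * (r * Vd / V) * E + G * (N * Vd / (2 * V\<^sup>2) + (mu * ft) * Q / V)
     = - (G * ft * (d - (N + mu * Q) / V)) + 1/2 * gt\<^sup>2 * (G * (N / V\<^sup>2 - d / V))"
  using assms by (simp add: field_simps power2_eq_square)

lemma fw:
  fixes a :: "real^'n"
  assumes cf: "continuous_on {0..1} f" and cg: "continuous_on {0..1} g" and sg: "sg > 0"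
  shows "sb_forward f g (\<lambda>t. gauss (alpha f t *\<^sub>R a) ((alpha f t)\<^sup>2 * sg + (alpha f t)\<^sup>2 * sig2 f g t))"
proof -
  define V where "V s = (alpha f s)\<^sup>2 * sg + (alpha f s)\<^sup>2 * sig2 f g s" for s
  define K where "K s = (2 * pi * V s) powr (- real CARD('n) / 2)" for s
  have feq: "(\<lambda>t. gauss (alpha f t *\<^sub>R a) ((alpha f t)\<^sup>2 * sg + (alpha f t)\<^sup>2 * sig2 f g t))
     = (\<lambda>s. gfun (K s) (alpha f s *\<^sub>R a) (V s))"
    by (simp add: fun_eq_iff gauss_def gfun_def K_def V_def)
  show ?thesis unfolding sb_forward_def feq
  proof (intro ballI allI conjI)
    fix t :: real and x :: "real^'n" assume t: "t \<in> {0..1}"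
    have Vpos: "V t > 0" unfolding V_def using alpha_pos[of f t] sig2_nn[OF cf cg t] sg
      by (simp add: add_pos_nonneg)
    then have V0: "V t \<noteq> 0" by simp
    show "twice_pdiff (gfun (K t) (alpha f t *\<^sub>R a) (V t)) x" by (rule twice_pdiff_ge[OF V0])
    fix i
    show "(\<lambda>h. gfun (K t) (alpha f t *\<^sub>R a) (V t) (x + h *\<^sub>R axis i 1) * (f t * (x + h *\<^sub>R axis i 1) $ i)) differentiable at 0"
      by (rule fw_diff[OF V0])
  next
    fix t :: real and x :: "real^'n" assume t: "t \<in> {0..1}"
    have Vpos: "V t > 0" unfolding V_def using alpha_pos[of f t] sig2_nn[OF cf cg t] sg
      by (simp add: add_pos_nonneg)
    then have V0: "V t \<noteq> 0" by simp
    have an: "alpha f t \<noteq> 0" using alpha_pos[of f t] by simp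
    have dV: "(V has_real_derivative 2 * f t * V t + (g t)\<^sup>2) (at t within {0..1})"
      unfolding V_def[abs_def]
      apply (rule derivative_eq_intros d_alpha[OF cf t] d_sig2[OF cf cg t] refl)+
      using an by (simp add: field_simps power2_eq_square)
    have dK: "(K has_real_derivative K t * ((- real CARD('n) / 2) * (2 * f t * V t + (g t)\<^sup>2) / V t)) (at t within {0..1})"
      unfolding K_def[abs_def] by (rule powr_deriv[OF dV Vpos]) simp
    note D = time_deriv[OF dK d_alpha[OF cf t] dV V0, of a x]
    show "((\<lambda>s. gfun (K s) (alpha f s *\<^sub>R a) (V s) x) has_real_derivative
        - (\<Sum>i\<in>UNIV. pd (\<lambda>y. gfun (K t) (alpha f t *\<^sub>R a) (V t) y * (f t * y $ i)) i x) +
        1 / 2 * (g t)\<^sup>2 * laplacian (gfun (K t) (alpha f t *\<^sub>R a) (V t)) x) (at t within {0..1})"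
      unfolding pd_fw[OF V0] sum_fw[of _ _ "x - alpha f t *\<^sub>R a"] laplacian_ge[OF V0] inner_split
      apply (rule DERIV_cong[OF D])
      apply (rule fw_alg[OF Vpos refl])
      by (simp_all add: gfun_def)
  qed
qed

lemma bw_alg:
  fixes V W Vd ft gt G K E r d N mu Q al :: real
  assumes "V > 0" "W > 0" "al \<noteq> 0" "V = al\<^sup>2 * W" "Vd = 2 * ft * V - gt\<^sup>2" "G = K * E" "r = - d / 2"
  shows "K * (r * (- (gt\<^sup>2 / al\<^sup>2)) / W) * E + G * (N * Vd / (2 * V\<^sup>2) + (mu * ft) * Q / V)
     = - (- G * ft * (N + mu * Q) / V) - 1/2 * gt\<^sup>2 * (G * (N / V\<^sup>2 - d / V))"
  unfolding assms(5,6,7) using assms(1-4) by (simp add: field_simps power2_eq_square)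

lemma bw:
  fixes b :: "real^'n"
  assumes cf: "continuous_on {0..1} f" and cg: "continuous_on {0..1} g" and sg: "sg > 0"
  shows "\<exists>c. (\<forall>t\<in>{0..1}. c t > 0) \<and>
    sb_backward f g (\<lambda>t x. c t * gauss (alphabar f t *\<^sub>R b) ((alpha f t)\<^sup>2 * sg + (alpha f t)\<^sup>2 * sigbar2 f g t) x)"
proof -
  define V where "V s = (alpha f s)\<^sup>2 * sg + (alpha f s)\<^sup>2 * sigbar2 f g s" for s
  define W where "W s = sg + sigbar2 f g s" for s
  define r where "r = - real CARD('n) / 2"
  define K where "K s = ((2 * pi * (alpha f 1)\<^sup>2) * W s) powr r" for s
  define c where "c s = K s / (2 * pi * V s) powr r" for s
  have Vpos: "V t > 0" if t: "t \<in> {0..1}" for t unfolding V_def using alpha_pos[of f t] sigbar2_nn[OF cf cg t] sg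
    by (simp add: add_pos_nonneg)
  have Wpos: "W t > 0" if t: "t \<in> {0..1}" for t unfolding W_def using sigbar2_nn[OF cf cg t] sg
    by simp
  have funeq: "(\<lambda>x. c t * gauss (alphabar f t *\<^sub>R b) (V t) x) = gfun (K t) (alphabar f t *\<^sub>R b) (V t)"
    if t: "t \<in> {0..1}" for t
    using Vpos[OF t] by (simp add: fun_eq_iff gauss_def gfun_def c_def r_def)
  have cpos: "\<forall>t\<in>{0..1}. c t > 0"
  proof
    fix t :: real assume t: "t \<in> {0..1}"
    show "c t > 0" unfolding c_def K_def
      using Wpos[OF t] Vpos[OF t] alpha_pos[of f 1] by (intro divide_pos_pos) simp_all
  qed
  have "sb_backward f g (\<lambda>t x. c t * gauss (alphabar f t *\<^sub>R b) (V t) x)"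
    unfolding sb_backward_def
  proof (intro ballI allI conjI)
    fix t :: real and x :: "real^'n" assume t: "t \<in> {0..1}"
    have V0: "V t \<noteq> 0" using Vpos[OF t] by simp
    show "twice_pdiff (\<lambda>x. c t * gauss (alphabar f t *\<^sub>R b) (V t) x) x"
      unfolding funeq[OF t] by (rule twice_pdiff_ge[OF V0])
  next
    fix t :: real and x :: "real^'n" assume t: "t \<in> {0..1}"
    have V0: "V t \<noteq> 0" using Vpos[OF t] by simp
    have an: "alpha f t \<noteq> 0" using alpha_pos[of f t] by simp
    have dV: "(V has_real_derivative 2 * f t * V t - (g t)\<^sup>2) (at t within {0..1})"
      unfolding V_def[abs_def]
      apply (rule derivative_eq_intros d_alpha[OF cf t] d_sigbar2[OF cf cg t] refl)+
      using an by (simp add: field_simps power2_eq_square)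
    have dW: "(W has_real_derivative - ((g t)\<^sup>2 / (alpha f t)\<^sup>2)) (at t within {0..1})"
      unfolding W_def[abs_def]
      by (rule derivative_eq_intros d_sigbar2[OF cf cg t] refl)+ simp
    have dK: "(K has_real_derivative K t * (r * (- ((g t)\<^sup>2 / (alpha f t)\<^sup>2)) / W t)) (at t within {0..1})"
      unfolding K_def[abs_def] by (rule powr_deriv[OF dW Wpos[OF t]]) (simp add: alpha_pos[of f 1, THEN less_imp_neq, symmetric])
    note D = time_deriv[OF dK d_alphabar[OF cf t] dV V0, of b x]
    have D2: "((\<lambda>s. gfun (K s) (alphabar f s *\<^sub>R b) (V s) x) has_real_derivative
        - (\<Sum>i\<in>UNIV. pd (gfun (K t) (alphabar f t *\<^sub>R b) (V t)) i x * (f t * x $ i)) -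
        1 / 2 * (g t)\<^sup>2 * laplacian (gfun (K t) (alphabar f t *\<^sub>R b) (V t)) x) (at t within {0..1})"
      unfolding pd_ge[OF V0] sum_bw[of _ "x - alphabar f t *\<^sub>R b"] laplacian_ge[OF V0] inner_split
      apply (rule DERIV_cong[OF D])
      apply (rule bw_alg[OF Vpos[OF t] Wpos[OF t] an _ _ _ r_def])
      by (simp_all add: gfun_def V_def W_def algebra_simps)
    show "((\<lambda>s. c s * gauss (alphabar f s *\<^sub>R b) (V s) x) has_real_derivative
        - (\<Sum>i\<in>UNIV. pd (\<lambda>x. c t * gauss (alphabar f t *\<^sub>R b) (V t) x) i x * (f t * x $ i)) -
        1 / 2 * (g t)\<^sup>2 * laplacian (\<lambda>x. c t * gauss (alphabar f t *\<^sub>R b) (V t) x) x) (at t within {0..1})"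
      unfolding funeq[OF t]
      apply (rule has_field_derivative_transform_within[OF D2 zero_less_one t])
      using funeq by (metis)
  qed
  then show ?thesis using cpos unfolding V_def by blast
qed

lemma normsq_diff: "(norm (x - y))\<^sup>2 = inner x x - 2 * inner x y + inner y y"
  unfolding power2_norm_eq_inner by (simp add: inner_diff_left inner_diff_right inner_commute)

lemma key_alg:
  fixes X A B M1 M2 M v v1 v2 :: real
  assumes "v \<noteq> 0" "X / v = X / v1 + X / v2"
  shows "(X - 2 * A + M1) / v1 + (X - 2 * B + M2) / v2 = (X - 2 * (v * (A / v1 + B / v2)) + M) / v + (M1 / v1 + M2 / v2 - M / v)"
proof -
  have "(X - 2 * (v * (A / v1 + B / v2)) + M) / v = X / v - 2 * (A / v1 + B / v2) + M / v"
    using assms(1) by (simp add: add_divide_distrib diff_divide_distrib)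
  then show ?thesis using assms(2) by (simp add: add_divide_distrib diff_divide_distrib)
qed

lemma gauss_prod:
  fixes m1 m2 m :: "real^'n"
  assumes v1: "v1 > 0" and v2: "v2 > 0" and v: "v > 0" and vv: "1/v = 1/v1 + 1/v2"
    and mm: "m = v *\<^sub>R ((1/v1) *\<^sub>R m1 + (1/v2) *\<^sub>R m2)"
  shows "\<exists>k>0. \<forall>x. gauss m1 v1 x * gauss m2 v2 x = k * gauss m v x"
proof -
  define C where "C = inner m1 m1 / v1 + inner m2 m2 / v2 - inner m m / v"
  define P where "P w = (2 * pi * w) powr (- real CARD('n) / 2)" for w
  have key: "(norm (x - m1))\<^sup>2 / v1 + (norm (x - m2))\<^sup>2 / v2 = (norm (x - m))\<^sup>2 / v + C" for x
  proof -
    have xm: "inner x m = v * (inner x m1 / v1 + inner x m2 / v2)"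
      unfolding mm by (simp add: inner_add_right)
    have X: "inner x x / v = inner x x / v1 + inner x x / v2"
    proof -
      have "inner x x / v = inner x x * (1 / v)" by simp
      also have "\<dots> = inner x x * (1/v1 + 1/v2)" using vv by simp
      also have "\<dots> = inner x x / v1 + inner x x / v2" by (simp add: distrib_left)
      finally show ?thesis .
    qed
    show ?thesis unfolding normsq_diff C_def xm
      using v by (intro key_alg X) simp
  qed
  define k where "k = P v1 * P v2 * exp (- C / 2) / P v"
  have "k > 0" unfolding k_def P_def using v v1 v2 by simp
  moreover have "gauss m1 v1 x * gauss m2 v2 x = k * gauss m v x" for x
  proof -
    have "gauss m1 v1 x * gauss m2 v2 x = P v1 * P v2 * exp (- ((norm (x - m1))\<^sup>2 / v1 + (norm (x - m2))\<^sup>2 / v2) / 2)"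
      unfolding gauss_def P_def[symmetric] by (simp add: exp_add[symmetric] add_divide_distrib)
    also have "\<dots> = P v1 * P v2 * exp (- C / 2) * exp (- (norm (x - m))\<^sup>2 / (2 * v))"
      unfolding key by (simp add: exp_add[symmetric] add_divide_distrib)
    also have "\<dots> = k * gauss m v x"
      unfolding k_def gauss_def P_def[symmetric] using v v1 v2 by (simp add: P_def)
    finally show ?thesis .
  qed
  ultimately show ?thesis by blast
qed

lemma sg_facts:
  fixes S eps sg :: real
  assumes S: "S > 0" and eps: "eps > 0" and sg: "sg = eps\<^sup>2 + (sqrt (S\<^sup>2 + 4 * eps ^ 4) - S) / 2"
  shows "sg > 0" "eps\<^sup>2 = sg * (sg + S) / (2 * sg + S)"
proof -
  define r where "r = sqrt (S\<^sup>2 + 4 * eps ^ 4)"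
  have r2: "r * r = S\<^sup>2 + 4 * eps ^ 4" unfolding r_def by (simp add: add_nonneg_nonneg)
  have rS: "r \<ge> S" unfolding r_def using S by (simp add: real_le_rsqrt)
  show sgp: "sg > 0" unfolding sg r_def[symmetric] using rS eps by (simp add: add_pos_nonneg)
  have "sg * (sg + S) - eps\<^sup>2 * (2 * sg + S) = (r * r - S\<^sup>2) / 4 - eps ^ 4"
    unfolding sg r_def[symmetric] by (simp add: field_simps power2_eq_square power4_eq_xxxx)
  then have "sg * (sg + S) = eps\<^sup>2 * (2 * sg + S)" using r2 by simp
  moreover have "2 * sg + S > 0" using sgp S by simp
  ultimately show "eps\<^sup>2 = sg * (sg + S) / (2 * sg + S)" by (simp add: field_simps)
qed

lemma tid1:
  fixes sg S u z :: real
  assumes "sg + S \<noteq> 0" "S \<noteq> 0"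
  shows "(1 / (sg + S)) * (z + (sg / S) * (z - u)) = u / (sg + S) - (u - z) / S"
  using assms by (simp add: field_simps)

lemma tid2:
  fixes sg S u z :: real
  assumes "sg \<noteq> 0" "S \<noteq> 0"
  shows "(1 / sg) * (u + (sg / S) * (u - z)) = u / sg + (u - z) / S"
  using assms by (simp add: field_simps)

lemma tid3:
  fixes sg S u e :: real
  assumes sg: "sg > 0" and S: "S > 0" and e: "e = sg * (sg + S) / (2 * sg + S)"
  shows "e * (u / (sg + S) + u / sg) = u"
proof -
  have n: "sg + S \<noteq> 0" "2 * sg + S \<noteq> 0" "sg \<noteq> 0" using sg S by auto
  have "u / (sg + S) + u / sg = u * (2 * sg + S) / (sg * (sg + S))"
    using n by (simp add: field_simps)
  then show ?thesis unfolding e using n by simp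
qed

lemma scal0:
  fixes sg S al e x0 x1 :: real
  assumes sg: "sg > 0" and S: "S > 0" and al: "al > 0" and e: "e = sg * (sg + S) / (2 * sg + S)"
  shows "x0 = e * ((1 / (sg + S)) * ((1 / al) * (x1 + (sg / S) * (x1 - al * x0))) + (1 / sg) * (x0 + (sg / S) * (x0 - (1 / al) * x1)))"
proof -
  have n: "sg + S \<noteq> 0" "al \<noteq> 0" "S \<noteq> 0" "sg \<noteq> 0" using sg S al by auto
  have r1: "(1 / al) * (x1 + (sg / S) * (x1 - al * x0)) = x1 / al + (sg / S) * (x1 / al - x0)"
    using n by (simp add: field_simps)
  have r2: "(1 / al) * x1 = x1 / al" by simp
  show ?thesis unfolding r1 r2 tid1[OF n(1,3)] tid2[OF n(4,3)]
    using tid3[OF sg S e, of x0] by (simp add: algebra_simps)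
qed

lemma scal1:
  fixes sg S al e x0 x1 :: real
  assumes sg: "sg > 0" and S: "S > 0" and al: "al > 0" and e: "e = sg * (sg + S) / (2 * sg + S)"
  shows "x1 = (al\<^sup>2 * e) * ((1 / (al\<^sup>2 * sg)) * (x1 + (sg / S) * (x1 - al * x0)) + (1 / (al\<^sup>2 * sg + al\<^sup>2 * S)) * (al * (x0 + (sg / S) * (x0 - (1 / al) * x1))))"
proof -
  have n: "sg + S \<noteq> 0" "al \<noteq> 0" "S \<noteq> 0" "sg \<noteq> 0" using sg S al by auto
  have r1: "(1 / (al\<^sup>2 * sg)) * (x1 + (sg / S) * (x1 - al * x0)) = (1 / al\<^sup>2) * ((1 / sg) * (x1 + (sg / S) * (x1 - al * x0)))"
    by simp
  have r2: "(1 / (al\<^sup>2 * sg + al\<^sup>2 * S)) * (al * (x0 + (sg / S) * (x0 - (1 / al) * x1)))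
     = (1 / al\<^sup>2) * ((1 / (sg + S)) * (al * x0 + (sg / S) * (al * x0 - x1)))"
  proof -
    have r2a: "al * (x0 + (sg / S) * (x0 - (1 / al) * x1)) = al * x0 + (sg / S) * (al * x0 - x1)"
      using n by (simp add: field_simps)
    have r2b: "1 / (al\<^sup>2 * sg + al\<^sup>2 * S) = (1 / al\<^sup>2) * (1 / (sg + S))"
      by (simp add: distrib_left[symmetric])
    show ?thesis unfolding r2a r2b by simp
  qed
  have x: "x1 = e * (x1 / (sg + S) + x1 / sg)" using tid3[OF sg S e, of x1] by simp
  have eq: "(1 / (al\<^sup>2 * sg)) * (x1 + (sg / S) * (x1 - al * x0)) + (1 / (al\<^sup>2 * sg + al\<^sup>2 * S)) * (al * (x0 + (sg / S) * (x0 - (1 / al) * x1)))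
     = (1 / al\<^sup>2) * (x1 / (sg + S) + x1 / sg)"
    unfolding r1 r2 tid1[OF n(1,3)] tid2[OF n(4,3)] by (simp add: algebra_simps)
  show ?thesis unfolding eq using n x by simp
qed

lemma boundary0:
  fixes x0 x1 a b :: "real^'n"
  assumes sg: "sg > 0" and S: "S > 0" and al: "al > 0" and e: "e = sg * (sg + S) / (2 * sg + S)"
    and a: "a = x0 + (sg / S) *\<^sub>R (x0 - (1 / al) *\<^sub>R x1)"
    and b: "b = x1 + (sg / S) *\<^sub>R (x1 - al *\<^sub>R x0)"
  shows "\<exists>k>0. \<forall>x. gauss ((1 / al) *\<^sub>R b) (sg + S) x * gauss a sg x = k * gauss x0 e x"
proof (rule gauss_prod)
  show "sg + S > 0" "sg > 0" using sg S by auto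
  show "e > 0" unfolding e using sg S by simp
  show "1 / e = 1 / (sg + S) + 1 / sg" unfolding e using sg S by (simp add: field_simps)
  show "x0 = e *\<^sub>R ((1 / (sg + S)) *\<^sub>R (1 / al) *\<^sub>R b + (1 / sg) *\<^sub>R a)"
    unfolding vec_eq_iff a b using scal0[OF sg S al e] by simp
qed

lemma boundary1:
  fixes x0 x1 a b :: "real^'n"
  assumes sg: "sg > 0" and S: "S > 0" and al: "al > 0" and e: "e = sg * (sg + S) / (2 * sg + S)"
    and a: "a = x0 + (sg / S) *\<^sub>R (x0 - (1 / al) *\<^sub>R x1)"
    and b: "b = x1 + (sg / S) *\<^sub>R (x1 - al *\<^sub>R x0)"
  shows "\<exists>k>0. \<forall>x. gauss b (al\<^sup>2 * sg) x * gauss (al *\<^sub>R a) (al\<^sup>2 * sg + al\<^sup>2 * S) x = k * gauss x1 (al\<^sup>2 * e) x"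
proof (rule gauss_prod)
  show "al\<^sup>2 * sg > 0" "al\<^sup>2 * sg + al\<^sup>2 * S > 0" using sg S al by (auto intro!: add_pos_pos)
  show "al\<^sup>2 * e > 0" unfolding e using sg S al by simp
  have h: "1 / e = 1 / (sg + S) + 1 / sg" unfolding e using sg S by (simp add: field_simps)
  have "1 / (al\<^sup>2 * e) = (1 / al\<^sup>2) * (1 / e)" by simp
  also have "\<dots> = 1 / (al\<^sup>2 * (sg + S)) + 1 / (al\<^sup>2 * sg)" unfolding h by (simp add: distrib_left)
  finally show "1 / (al\<^sup>2 * e) = 1 / (al\<^sup>2 * sg) + 1 / (al\<^sup>2 * sg + al\<^sup>2 * S)" by (simp add: distrib_left)
  show "x1 = (al\<^sup>2 * e) *\<^sub>R ((1 / (al\<^sup>2 * sg)) *\<^sub>R b + (1 / (al\<^sup>2 * sg + al\<^sup>2 * S)) *\<^sub>R al *\<^sub>R a)"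
    unfolding vec_eq_iff a b using scal1[OF sg S al e] by simp
qed

lemma sg_lim:
  fixes S :: real
  assumes "S \<ge> 0"
  shows "((\<lambda>eps. eps\<^sup>2 + (sqrt (S\<^sup>2 + 4 * eps ^ 4) - S) / 2) \<longlongrightarrow> 0) (at_right 0)"
proof -
  have "((\<lambda>eps. eps\<^sup>2 + (sqrt (S\<^sup>2 + 4 * eps ^ 4) - S) / 2) \<longlongrightarrow> 0\<^sup>2 + (sqrt (S\<^sup>2 + 4 * 0 ^ 4) - S) / 2) (at_right 0)"
    by (intro tendsto_intros) auto
  then show ?thesis using assms by simp
qed

lemma gauss_tendsto:
  fixes mf :: "real \<Rightarrow> real^'n"
  assumes "(mf \<longlongrightarrow> m) F" "(vf \<longlongrightarrow> v) F" "v > 0"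
  shows "((\<lambda>e. gauss (mf e) (vf e) x) \<longlongrightarrow> gauss m v x) F"
  unfolding gauss_def using assms by (intro tendsto_intros) auto

lemma alpha0: "alpha f 0 = 1" by (simp add: alpha_def)
lemma sig20: "sig2 f g 0 = 0" by (simp add: sig2_def)
lemma alphabar1: "alphabar f 1 = 1" by (simp add: alphabar_def)
lemma sigbar21: "sigbar2 f g 1 = 0" by (simp add: sigbar2_def)
lemma alphabar0: "alphabar f 0 = 1 / alpha f 1" by (simp add: alphabar_def alpha_def exp_minus inverse_eq_divide)
lemma sigbar20: "sigbar2 f g 0 = sig2 f g 1" by (simp add: sigbar2_def sig2_def)

theorem lemma1:
  fixes f g :: "real \<Rightarrow> real" and x0 x1 :: "real^'n"
  assumes "continuous_on {0..1} f" and "continuous_on {0..1} g"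
    and "\<exists>t\<in>{0..1}. g t \<noteq> 0"
  shows "(\<forall>eps>0.
            (\<exists>c ch. (\<forall>t\<in>{0..1}. c t > 0 \<and> ch t > 0)
                \<and> sb_backward f g (\<lambda>t x. c t * Psi f g x0 x1 eps t x)
                \<and> sb_forward f g (\<lambda>t x. ch t * Psihat f g x0 x1 eps t x))
          \<and> (\<exists>k>0. \<forall>x. Psi f g x0 x1 eps 0 x * Psihat f g x0 x1 eps 0 x = k * gauss x0 (eps\<^sup>2) x)
          \<and> (\<exists>k>0. \<forall>x. Psi f g x0 x1 eps 1 x * Psihat f g x0 x1 eps 1 x
                        = k * gauss x1 ((alpha f 1)\<^sup>2 * eps\<^sup>2) x))
       \<and> (\<forall>t\<in>{0..1}. \<forall>x. (alpha f t)\<^sup>2 * sig2 f g t > 0 \<longrightarrow>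
            ((\<lambda>eps. Psihat f g x0 x1 eps t x)
               \<longlongrightarrow> gauss (alpha f t *\<^sub>R x0) ((alpha f t)\<^sup>2 * sig2 f g t) x) (at_right 0))
       \<and> (\<forall>t\<in>{0..1}. \<forall>x. (alpha f t)\<^sup>2 * sigbar2 f g t > 0 \<longrightarrow>
            ((\<lambda>eps. Psi f g x0 x1 eps t x)
               \<longlongrightarrow> gauss (alphabar f t *\<^sub>R x1) ((alpha f t)\<^sup>2 * sigbar2 f g t) x) (at_right 0))"
proof -
  note cf = assms(1) and cg = assms(2)
  have S: "sig2 f g 1 > 0" by (rule sig2_1_pos[OF assms])
  have al1: "alpha f 1 > 0" by (rule alpha_pos)
  have P1: "\<forall>eps>0.
            (\<exists>c ch. (\<forall>t\<in>{0..1}. c t > 0 \<and> ch t > 0)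
                \<and> sb_backward f g (\<lambda>t x. c t * Psi f g x0 x1 eps t x)
                \<and> sb_forward f g (\<lambda>t x. ch t * Psihat f g x0 x1 eps t x))
          \<and> (\<exists>k>0. \<forall>x. Psi f g x0 x1 eps 0 x * Psihat f g x0 x1 eps 0 x = k * gauss x0 (eps\<^sup>2) x)
          \<and> (\<exists>k>0. \<forall>x. Psi f g x0 x1 eps 1 x * Psihat f g x0 x1 eps 1 x
                        = k * gauss x1 ((alpha f 1)\<^sup>2 * eps\<^sup>2) x)"
  proof (intro allI impI conjI)
    fix eps :: real assume eps: "eps > 0"
    note sgf = sg_facts[OF S eps sbsigma2_def]
    show "\<exists>c ch. (\<forall>t\<in>{0..1}. c t > 0 \<and> ch t > 0)
                \<and> sb_backward f g (\<lambda>t x. c t * Psi f g x0 x1 eps t x)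
                \<and> sb_forward f g (\<lambda>t x. ch t * Psihat f g x0 x1 eps t x)"
    proof -
      obtain c where c: "\<forall>t\<in>{0..1}. c t > 0"
        "sb_backward f g (\<lambda>t x. c t * gauss (alphabar f t *\<^sub>R sb_b f g x0 x1 eps)
            ((alpha f t)\<^sup>2 * sbsigma2 f g eps + (alpha f t)\<^sup>2 * sigbar2 f g t) x)"
        using bw[OF cf cg sgf(1), of "sb_b f g x0 x1 eps"] by (elim exE conjE)
      have e1: "(\<lambda>t x. c t * Psi f g x0 x1 eps t x) = (\<lambda>t x. c t * gauss (alphabar f t *\<^sub>R sb_b f g x0 x1 eps)
            ((alpha f t)\<^sup>2 * sbsigma2 f g eps + (alpha f t)\<^sup>2 * sigbar2 f g t) x)"
        by (simp add: Psi_def)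
      have e2: "(\<lambda>t x. (\<lambda>_. 1::real) t * Psihat f g x0 x1 eps t x) = (\<lambda>t. gauss (alpha f t *\<^sub>R sb_a f g x0 x1 eps)
            ((alpha f t)\<^sup>2 * sbsigma2 f g eps + (alpha f t)\<^sup>2 * sig2 f g t))"
        by (simp add: fun_eq_iff Psihat_def)
      have "(\<forall>t\<in>{0..1}. c t > 0 \<and> (\<lambda>_. 1::real) t > 0)
                \<and> sb_backward f g (\<lambda>t x. c t * Psi f g x0 x1 eps t x)
                \<and> sb_forward f g (\<lambda>t x. (\<lambda>_. 1::real) t * Psihat f g x0 x1 eps t x)"
        unfolding e1 e2 using c fw[OF cf cg sgf(1)] by simp
      then show ?thesis by (intro exI[of _ c] exI[of _ "\<lambda>_. 1::real"])
    qed
    have q0: "Psi f g x0 x1 eps 0 x * Psihat f g x0 x1 eps 0 x =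
       gauss ((1 / alpha f 1) *\<^sub>R sb_b f g x0 x1 eps) (sbsigma2 f g eps + sig2 f g 1) x * gauss (sb_a f g x0 x1 eps) (sbsigma2 f g eps) x" for x
      by (simp add: Psi_def Psihat_def alpha0 alphabar0 sig20 sigbar20)
    show "\<exists>k>0. \<forall>x. Psi f g x0 x1 eps 0 x * Psihat f g x0 x1 eps 0 x = k * gauss x0 (eps\<^sup>2) x"
      unfolding q0 by (rule boundary0[OF sgf(1) S al1 sgf(2) sb_a_def sb_b_def])
    have q1: "Psi f g x0 x1 eps 1 x * Psihat f g x0 x1 eps 1 x =
       gauss (sb_b f g x0 x1 eps) ((alpha f 1)\<^sup>2 * sbsigma2 f g eps) x *
       gauss (alpha f 1 *\<^sub>R sb_a f g x0 x1 eps) ((alpha f 1)\<^sup>2 * sbsigma2 f g eps + (alpha f 1)\<^sup>2 * sig2 f g 1) x" for x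
      by (simp add: Psi_def Psihat_def alphabar1 sigbar21)
    show "\<exists>k>0. \<forall>x. Psi f g x0 x1 eps 1 x * Psihat f g x0 x1 eps 1 x = k * gauss x1 ((alpha f 1)\<^sup>2 * eps\<^sup>2) x"
      unfolding q1 by (rule boundary1[OF sgf(1) S al1 sgf(2) sb_a_def sb_b_def])
  qed
  have lsg: "(sbsigma2 f g \<longlongrightarrow> 0) (at_right 0)"
    unfolding sbsigma2_def[abs_def] using sg_lim[of "sig2 f g 1"] S by simp
  have la: "((\<lambda>eps. sb_a f g x0 x1 eps) \<longlongrightarrow> x0) (at_right 0)"
  proof -
    have "((\<lambda>eps. x0 + (sbsigma2 f g eps / sig2 f g 1) *\<^sub>R (x0 - (1 / alpha f 1) *\<^sub>R x1))
       \<longlongrightarrow> x0 + (0 / sig2 f g 1) *\<^sub>R (x0 - (1 / alpha f 1) *\<^sub>R x1)) (at_right 0)"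
      using S by (intro tendsto_intros lsg) simp
    then show ?thesis by (simp add: sb_a_def)
  qed
  have lb: "((\<lambda>eps. sb_b f g x0 x1 eps) \<longlongrightarrow> x1) (at_right 0)"
  proof -
    have "((\<lambda>eps. x1 + (sbsigma2 f g eps / sig2 f g 1) *\<^sub>R (x1 - alpha f 1 *\<^sub>R x0))
       \<longlongrightarrow> x1 + (0 / sig2 f g 1) *\<^sub>R (x1 - alpha f 1 *\<^sub>R x0)) (at_right 0)"
      using S by (intro tendsto_intros lsg) simp
    then show ?thesis by (simp add: sb_b_def)
  qed
  have P2: "\<forall>t\<in>{0..1}. \<forall>x. (alpha f t)\<^sup>2 * sig2 f g t > 0 \<longrightarrow>
            ((\<lambda>eps. Psihat f g x0 x1 eps t x)
               \<longlongrightarrow> gauss (alpha f t *\<^sub>R x0) ((alpha f t)\<^sup>2 * sig2 f g t) x) (at_right 0)"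
  proof (intro ballI allI impI)
    fix t x assume t: "t \<in> {0..1}" and pos: "(alpha f t)\<^sup>2 * sig2 f g t > 0"
    have "((\<lambda>eps. gauss (alpha f t *\<^sub>R sb_a f g x0 x1 eps) ((alpha f t)\<^sup>2 * sbsigma2 f g eps + (alpha f t)\<^sup>2 * sig2 f g t) x)
       \<longlongrightarrow> gauss (alpha f t *\<^sub>R x0) ((alpha f t)\<^sup>2 * 0 + (alpha f t)\<^sup>2 * sig2 f g t) x) (at_right 0)"
      by (rule gauss_tendsto) (intro tendsto_intros la lsg, intro tendsto_intros lsg, use pos in simp)
    then show "((\<lambda>eps. Psihat f g x0 x1 eps t x)
               \<longlongrightarrow> gauss (alpha f t *\<^sub>R x0) ((alpha f t)\<^sup>2 * sig2 f g t) x) (at_right 0)"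
      by (simp add: Psihat_def)
  qed
  have P3: "\<forall>t\<in>{0..1}. \<forall>x. (alpha f t)\<^sup>2 * sigbar2 f g t > 0 \<longrightarrow>
            ((\<lambda>eps. Psi f g x0 x1 eps t x)
               \<longlongrightarrow> gauss (alphabar f t *\<^sub>R x1) ((alpha f t)\<^sup>2 * sigbar2 f g t) x) (at_right 0)"
  proof (intro ballI allI impI)
    fix t x assume t: "t \<in> {0..1}" and pos: "(alpha f t)\<^sup>2 * sigbar2 f g t > 0"
    have "((\<lambda>eps. gauss (alphabar f t *\<^sub>R sb_b f g x0 x1 eps) ((alpha f t)\<^sup>2 * sbsigma2 f g eps + (alpha f t)\<^sup>2 * sigbar2 f g t) x)
       \<longlongrightarrow> gauss (alphabar f t *\<^sub>R x1) ((alpha f t)\<^sup>2 * 0 + (alpha f t)\<^sup>2 * sigbar2 f g t) x) (at_right 0)"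
      by (rule gauss_tendsto) (intro tendsto_intros lb lsg, intro tendsto_intros lsg, use pos in simp)
    then show "((\<lambda>eps. Psi f g x0 x1 eps t x)
               \<longlongrightarrow> gauss (alphabar f t *\<^sub>R x1) ((alpha f t)\<^sup>2 * sigbar2 f g t) x) (at_right 0)"
      by (simp add: Psi_def)
  qed
  show ?thesis by (intro conjI P1 P2 P3)
qed

end
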